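(* Let $I=\langle Q,D,\tau_{in},\tau_{out}\rangle$ be an instance of DTP, let $C_I$ be its critical domain, $U_I$ its critical update and $Q_I'$ its critical query (as defined in the context). Then DTP holds for $I$ if and only if for every tuple $\vec o$ over $C_I$, $\vec o\in Q_I'(D\cup U_I,\tau_{out})$ implies $\vec o\in Q_I'(D,\tau_{out})$.
   Context: Temporal Datalog. Constants are partitioned into objects and integer time points; variables into object variables and time variables. A time term is a time point, a time variable, or an expression $t+k$ with $t$ a time variable and $k\in\mathbb{Z}$. Each predicate is either extensional (EDB) or intensional (IDB) and has an arity $n\ge0$, each position being of object sort or time sort; a predicate is rigid if all its positions are of object sort, and temporal if its last position is of time sort and all others are of object sort. An atom $P(t_1,\dots,t_n)$ has terms of the required sorts. A rule is $\bigwedge_i\alpha_i\to\alpha$ with $\alpha$ and all $\alpha_i$ rigid or temporal atoms, $\alpha$ IDB whenever the body is nonempty, and every head variable occurring in the body. A program is a finite set of rules. A fact is a ground rigid or temporal atom without $+$ (identified with the rule $\top\to\alpha$); a dataset is a finite set of EDB facts. Rules are read as universally quantified first-order sentences with $+$ interpreted as integer addition; $\Pi\models\alpha$ denotes entailment. A query is $Q=\langle P_Q,\Pi_Q\rangle$ with $\Pi_Q$ a program and $P_Q$ an IDB predicate of $\Pi_Q$; it is temporal if $P_Q$ is temporal. For a temporal query $Q$, dataset $D$ and time point $\tau$, $Q(D,\tau)$ is the set of tuples of objects $\vec o$ with $\Pi_Q\cup D\models P_Q(\vec o,\tau)$. A $\tau_{in}$-history is a dataset consisting of rigid facts and temporal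 facts with time argument $\le\tau_{in}$; a $\tau_{in}$-update is a dataset consisting of temporal facts with time argument $>\tau_{in}$. Definitive Time Point (DTP): an instance is $\langle Q,D,\tau_{in},\tau_{out}\rangle$ with $Q$ a temporal query, $D$ a $\tau_{in}$-history and $\tau_{out}\le\tau_{in}$; DTP holds for it iff $Q(D,\tau_{out})=Q(D\cup U,\tau_{out})$ for every $\tau_{in}$-update $U$. Critical domain: $C_I$ is the set of all objects occurring in $\Pi_Q\cup D$ together with one fresh object $o_I$. Let $\psi$ be the renaming that maps each temporal EDB predicate to a fresh temporal IDB predicate of the same arity. Critical update: with $A$ a fresh unary temporal EDB predicate, $U_I$ is the $\tau_{in}$-update containing $A(\tau_{in}+1)$ and all facts $P(\vec o,\tau_{in}+1)$ for each temporal EDB predicate $P$ of $\Pi_Q$ and each tuple $\vec o$ over $C_I$. Critical query: with $V$ a fresh unary temporal IDB predicate, $Q_I'=\langle P_Q,\Pi'\rangle$ where $\Pi'$ consists of $\psi(\Pi_Q)$ together with the rules $A(t)\to V(t)$, $V(t)\to V(t+1)$, and, for each temporal EDB predicate $P$ of $\Pi_Q$ with $P'=\psi(P)$, the rules $P(\vec x,t)\to P'(\vec x,t)$ and $V(t+1)\wedge P'(\vec x,t)\to P'(\vec x,t+1)$. *)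

theory Defs
  imports Main
begin

text \<open>A predicate carries its name, whether it is extensional (EDB), the number of
  object positions, and whether it is temporal (last position of time sort) or rigid.\<close>
datatype 'n pred = Pred (pname: 'n) (is_edb: bool) (oarity: nat) (is_temporal: bool)

text \<open>Time terms: time points (int), or \<open>t + k\<close> for a time variable t (nat) and k :: int
  (a plain time variable t is \<open>TV t 0\<close>).\<close>
datatype 'o oterm = OC 'o | OV nat
datatype tterm = TC int | TV nat int

datatype ('n, 'o) atom = Atom "'n pred" "'o oterm list" "tterm option"

fun atom_pred :: "('n, 'o) atom \<Rightarrow> 'n pred" where
  "atom_pred (Atom P _ _) = P"

fun wf_atom :: "('n, 'o) atom \<Rightarrow> bool" where
  "wf_atom (Atom P os t) \<longleftrightarrow> length os = oarity P \<and> (is_temporal P \<longleftrightarrow> t \<noteq> None)"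

fun ovars_ot :: "'o oterm \<Rightarrow> nat set" where
  "ovars_ot (OC _) = {}" | "ovars_ot (OV x) = {x}"

fun tvars_tt :: "tterm \<Rightarrow> nat set" where
  "tvars_tt (TC _) = {}" | "tvars_tt (TV x _) = {x}"

fun ovars_atom :: "('n, 'o) atom \<Rightarrow> nat set" where
  "ovars_atom (Atom _ os _) = (\<Union>ot\<in>set os. ovars_ot ot)"

fun tvars_atom :: "('n, 'o) atom \<Rightarrow> nat set" where
  "tvars_atom (Atom _ _ t) = (case t of None \<Rightarrow> {} | Some tt \<Rightarrow> tvars_tt tt)"

fun consts_atom :: "('n, 'o) atom \<Rightarrow> 'o set" where
  "consts_atom (Atom _ os _) = {c. OC c \<in> set os}"

datatype ('n, 'o) rule = Rule (body: "('n, 'o) atom list") (head: "('n, 'o) atom")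

definition wf_rule :: "('n, 'o) rule \<Rightarrow> bool" where
  "wf_rule r \<longleftrightarrow>
     (\<forall>a\<in>set (body r). wf_atom a) \<and> wf_atom (head r) \<and>
     (body r \<noteq> [] \<longrightarrow> \<not> is_edb (atom_pred (head r))) \<and>
     ovars_atom (head r) \<subseteq> (\<Union>a\<in>set (body r). ovars_atom a) \<and>
     tvars_atom (head r) \<subseteq> (\<Union>a\<in>set (body r). tvars_atom a)"

type_synonym ('n, 'o) program = "('n, 'o) rule set"

definition wf_program :: "('n, 'o) program \<Rightarrow> bool" where
  "wf_program \<Pi> \<longleftrightarrow> finite \<Pi> \<and> (\<forall>r\<in>\<Pi>. wf_rule r)"

definition preds_of_rule :: "('n, 'o) rule \<Rightarrow> 'n pred set" where
  "preds_of_rule r = atom_pred ` (set (body r) \<union> {head r})"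

definition preds_of :: "('n, 'o) program \<Rightarrow> 'n pred set" where
  "preds_of \<Pi> = (\<Union>r\<in>\<Pi>. preds_of_rule r)"

definition consts_of :: "('n, 'o) program \<Rightarrow> 'o set" where
  "consts_of \<Pi> = (\<Union>r\<in>\<Pi>. \<Union>a\<in>set (body r) \<union> {head r}. consts_atom a)"

type_synonym ('n, 'o) fact = "'n pred \<times> 'o list \<times> int option"

definition wf_fact :: "('n, 'o) fact \<Rightarrow> bool" where
  "wf_fact f \<longleftrightarrow> (case f of (P, os, t) \<Rightarrow>
     length os = oarity P \<and> (is_temporal P \<longleftrightarrow> t \<noteq> None))"

definition is_dataset :: "('n, 'o) fact set \<Rightarrow> bool" where
  "is_dataset D \<longleftrightarrow> finite D \<and> (\<forall>f\<in>D. wf_fact f \<and> is_edb (fst f))"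

definition consts_facts :: "('n, 'o) fact set \<Rightarrow> 'o set" where
  "consts_facts D = (\<Union>f\<in>D. set (fst (snd f)))"

fun eval_ot :: "(nat \<Rightarrow> 'o) \<Rightarrow> 'o oterm \<Rightarrow> 'o" where
  "eval_ot \<sigma> (OC c) = c" | "eval_ot \<sigma> (OV x) = \<sigma> x"

fun eval_tt :: "(nat \<Rightarrow> int) \<Rightarrow> tterm \<Rightarrow> int" where
  "eval_tt \<theta> (TC k) = k" | "eval_tt \<theta> (TV x k) = \<theta> x + k"

fun eval_atom :: "(nat \<Rightarrow> 'o) \<Rightarrow> (nat \<Rightarrow> int) \<Rightarrow> ('n, 'o) atom \<Rightarrow> ('n, 'o) fact" where
  "eval_atom \<sigma> \<theta> (Atom P os t) = (P, map (eval_ot \<sigma>) os, map_option (eval_tt \<theta>) t)"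

text \<open>An (Herbrand) interpretation is a set of facts; the time sort is interpreted by the
  integers with \<open>+\<close> as integer addition.\<close>
definition sat_rule :: "('n, 'o) fact set \<Rightarrow> ('n, 'o) rule \<Rightarrow> bool" where
  "sat_rule M r \<longleftrightarrow>
     (\<forall>\<sigma> \<theta>. (\<forall>a\<in>set (body r). eval_atom \<sigma> \<theta> a \<in> M) \<longrightarrow> eval_atom \<sigma> \<theta> (head r) \<in> M)"

definition entails :: "('n, 'o) program \<Rightarrow> ('n, 'o) fact set \<Rightarrow> ('n, 'o) fact \<Rightarrow> bool" where
  "entails \<Pi> D \<alpha> \<longleftrightarrow> (\<forall>M. (\<forall>r\<in>\<Pi>. sat_rule M r) \<longrightarrow> D \<subseteq> M \<longrightarrow> \<alpha> \<in> M)"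

type_synonym ('n, 'o) query = "'n pred \<times> ('n, 'o) program"

definition wf_query :: "('n, 'o) query \<Rightarrow> bool" where
  "wf_query Q \<longleftrightarrow> wf_program (snd Q) \<and> \<not> is_edb (fst Q) \<and> fst Q \<in> preds_of (snd Q)"

definition temporal_query :: "('n, 'o) query \<Rightarrow> bool" where
  "temporal_query Q \<longleftrightarrow> is_temporal (fst Q)"

definition answers :: "('n, 'o) query \<Rightarrow> ('n, 'o) fact set \<Rightarrow> int \<Rightarrow> 'o list set" where
  "answers Q D \<tau> = {os. length os = oarity (fst Q) \<and> entails (snd Q) D (fst Q, os, Some \<tau>)}"

definition is_history :: "int \<Rightarrow> ('n, 'o) fact set \<Rightarrow> bool" where
  "is_history \<tau>in D \<longleftrightarrow> is_dataset D \<and>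
     (\<forall>f\<in>D. case snd (snd f) of None \<Rightarrow> True | Some \<tau> \<Rightarrow> \<tau> \<le> \<tau>in)"

definition is_update :: "int \<Rightarrow> ('n, 'o) fact set \<Rightarrow> bool" where
  "is_update \<tau>in U \<longleftrightarrow> is_dataset U \<and>
     (\<forall>f\<in>U. case snd (snd f) of None \<Rightarrow> False | Some \<tau> \<Rightarrow> \<tau> > \<tau>in)"

definition DTP :: "('n, 'o) query \<Rightarrow> ('n, 'o) fact set \<Rightarrow> int \<Rightarrow> int \<Rightarrow> bool" where
  "DTP Q D \<tau>in \<tau>out \<longleftrightarrow>
     (\<forall>U. is_update \<tau>in U \<longrightarrow> answers Q D \<tau>out = answers Q (D \<union> U) \<tau>out)"

text \<open>Fresh predicate names: the original names are embedded via \<open>Orig\<close>; \<open>PsiN n\<close> names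
  \<open>\<psi>(P)\<close>; \<open>NameA\<close>, \<open>NameV\<close> name the fresh predicates A and V.\<close>
datatype 'n xname = Orig 'n | PsiN 'n | NameA | NameV

abbreviation lift_pred :: "'n pred \<Rightarrow> 'n xname pred" where
  "lift_pred \<equiv> map_pred Orig"

fun lift_atom :: "('n, 'o) atom \<Rightarrow> ('n xname, 'o) atom" where
  "lift_atom (Atom P os t) = Atom (lift_pred P) os t"

definition lift_facts :: "('n, 'o) fact set \<Rightarrow> ('n xname, 'o) fact set" where
  "lift_facts D = (\<lambda>(P, os, t). (lift_pred P, os, t)) ` D"

fun psi_pred :: "'n pred \<Rightarrow> 'n xname pred" where
  "psi_pred (Pred n e k t) = (if e \<and> t then Pred (PsiN n) False k True else Pred (Orig n) e k t)"

fun psi_atom :: "('n, 'o) atom \<Rightarrow> ('n xname, 'o) atom" where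
  "psi_atom (Atom P os t) = Atom (psi_pred P) os t"

fun psi_rule :: "('n, 'o) rule \<Rightarrow> ('n xname, 'o) rule" where
  "psi_rule (Rule bs h) = Rule (map psi_atom bs) (psi_atom h)"

definition predA :: "'n xname pred" where "predA = Pred NameA True 0 True"
definition predV :: "'n xname pred" where "predV = Pred NameV False 0 True"

definition temporal_edb_preds :: "('n, 'o) program \<Rightarrow> 'n pred set" where
  "temporal_edb_preds \<Pi> = {P \<in> preds_of \<Pi>. is_edb P \<and> is_temporal P}"

definition crit_domain :: "('n, 'o) query \<Rightarrow> ('n, 'o) fact set \<Rightarrow> 'o \<Rightarrow> 'o set" where
  "crit_domain Q D oI = consts_of (snd Q) \<union> consts_facts D \<union> {oI}"

definition crit_update ::
  "('n, 'o) query \<Rightarrow> ('n, 'o) fact set \<Rightarrow> 'o \<Rightarrow> int \<Rightarrow> ('n xname, 'o) fact set" where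
  "crit_update Q D oI \<tau>in =
     {(predA, [], Some (\<tau>in + 1))} \<union>
     {(lift_pred P, os, Some (\<tau>in + 1)) | P os.
        P \<in> temporal_edb_preds (snd Q) \<and> length os = oarity P \<and> set os \<subseteq> crit_domain Q D oI}"

definition xvars :: "nat \<Rightarrow> 'o oterm list" where
  "xvars k = map OV [0..<k]"

definition tvar :: "int \<Rightarrow> tterm option" where
  "tvar k = Some (TV 0 k)"

definition crit_program :: "('n, 'o) query \<Rightarrow> ('n xname, 'o) program" where
  "crit_program Q =
     psi_rule ` snd Q \<union>
     { Rule [Atom predA [] (tvar 0)] (Atom predV [] (tvar 0)),
       Rule [Atom predV [] (tvar 0)] (Atom predV [] (tvar 1)) } \<union>
     (\<Union>P\<in>temporal_edb_preds (snd Q).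
       { Rule [Atom (lift_pred P) (xvars (oarity P)) (tvar 0)]
              (Atom (psi_pred P) (xvars (oarity P)) (tvar 0)),
         Rule [Atom predV [] (tvar 1), Atom (psi_pred P) (xvars (oarity P)) (tvar 0)]
              (Atom (psi_pred P) (xvars (oarity P)) (tvar 1)) })"

text \<open>\<open>Q'_I = \<langle>P_Q, \<Pi>'\<rangle>\<close> (P_Q is IDB, so it is unaffected by \<psi>).\<close>
definition crit_query :: "('n, 'o) query \<Rightarrow> ('n xname, 'o) query" where
  "crit_query Q = (lift_pred (fst Q), crit_program Q)"

end

theory Submission
  imports Defs
begin


inductive derivable :: "('n,'o) program \<Rightarrow> ('n,'o) fact set \<Rightarrow> ('n,'o) fact \<Rightarrow> bool"
  for Pi B where
  dbase: "f \<in> B \<Longrightarrow> derivable Pi B f"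
| drule: "r \<in> Pi \<Longrightarrow> (\<And>a. a \<in> set (body r) \<Longrightarrow> derivable Pi B (eval_atom \<sigma> \<theta> a))
     \<Longrightarrow> derivable Pi B (eval_atom \<sigma> \<theta> (head r))"

lemma drule': "r \<in> Pi \<Longrightarrow> (\<And>a. a \<in> set (body r) \<Longrightarrow> derivable Pi B (eval_atom \<sigma> \<theta> a))
     \<Longrightarrow> f = eval_atom \<sigma> \<theta> (head r) \<Longrightarrow> derivable Pi B f"
  using drule by blast

lemma derivable_in_model:
  "derivable Pi B f \<Longrightarrow> (\<forall>r\<in>Pi. sat_rule M r) \<Longrightarrow> B \<subseteq> M \<Longrightarrow> f \<in> M"
  by (induction rule: derivable.induct) (auto simp: sat_rule_def)

lemma entails_iff: "entails Pi B f \<longleftrightarrow> derivable Pi B f"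
proof
  assume "entails Pi B f"
  moreover have "\<forall>r\<in>Pi. sat_rule {f. derivable Pi B f} r"
    by (auto simp: sat_rule_def intro: drule)
  moreover have "B \<subseteq> {f. derivable Pi B f}" by (auto intro: dbase)
  ultimately show "derivable Pi B f" unfolding entails_def by blast
next
  assume "derivable Pi B f" then show "entails Pi B f"
    unfolding entails_def using derivable_in_model by blast
qed

lemma derivable_mono: "derivable Pi B f \<Longrightarrow> B \<subseteq> B2 \<Longrightarrow> derivable Pi B2 f"
proof (induction rule: derivable.induct)
  case (dbase f) then show ?case by (auto intro: derivable.dbase)
next
  case (drule r \<sigma> \<theta>) then show ?case by (auto intro: derivable.drule)
qed

lemma derivable_compact: "derivable Pi B f \<Longrightarrow> \<exists>F. F \<subseteq> B \<and> finite F \<and> derivable Pi F f"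
proof (induction rule: derivable.induct)
  case (dbase f) then show ?case by (intro exI[of _ "{f}"]) (auto intro: derivable.dbase)
next
  case (drule r \<sigma> \<theta>)
  then have "\<forall>a\<in>set (body r). \<exists>F. F \<subseteq> B \<and> finite F \<and> derivable Pi F (eval_atom \<sigma> \<theta> a)" by blast
  then obtain Fs where Fs: "\<forall>a\<in>set (body r). Fs a \<subseteq> B \<and> finite (Fs a) \<and> derivable Pi (Fs a) (eval_atom \<sigma> \<theta> a)"
    by metis
  let ?F = "\<Union>a\<in>set (body r). Fs a"
  have "derivable Pi ?F (eval_atom \<sigma> \<theta> (head r))"
  proof (rule derivable.drule[OF drule.hyps(1)])
    fix a assume "a \<in> set (body r)"
    then show "derivable Pi ?F (eval_atom \<sigma> \<theta> a)" using Fs derivable_mono by blast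
  qed
  moreover have "?F \<subseteq> B" "finite ?F" using Fs by auto
  ultimately show ?case by blast
qed

lemma wf_eval: "wf_atom a \<Longrightarrow> wf_fact (eval_atom \<sigma> \<theta> a)"
  by (cases a) (auto simp: wf_fact_def)

lemma derivable_wf: "derivable Pi B f \<Longrightarrow> wf_program Pi \<Longrightarrow> (\<forall>g\<in>B. wf_fact g) \<Longrightarrow> wf_fact f"
proof (induction rule: derivable.induct)
  case (dbase f) then show ?case by auto
next
  case (drule r \<sigma> \<theta>) then show ?case
    by (auto simp: wf_program_def wf_rule_def intro: wf_eval)
qed

lemma derivable_adom: "derivable Pi B f \<Longrightarrow> wf_program Pi \<Longrightarrow>
   set (fst (snd f)) \<subseteq> consts_of Pi \<union> consts_facts B"
proof (induction rule: derivable.induct)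
  case (dbase f) then show ?case by (auto simp: consts_facts_def)
next
  case (drule r \<sigma> \<theta>)
  obtain P os t where hr: "head r = Atom P os t" by (cases "head r")
  have wr: "wf_rule r" using drule.hyps(1) drule.prems by (auto simp: wf_program_def)
  show ?case
  proof
    fix c assume "c \<in> set (fst (snd (eval_atom \<sigma> \<theta> (head r))))"
    then obtain ot where ot: "ot \<in> set os" "c = eval_ot \<sigma> ot" using hr by auto
    show "c \<in> consts_of Pi \<union> consts_facts B"
    proof (cases ot)
      case (OC c')
      then have "c \<in> consts_atom (head r)" using ot hr by auto
      then show ?thesis using drule.hyps(1) unfolding consts_of_def by blast
    next
      case (OV x)
      then have "x \<in> ovars_atom (head r)" using ot hr by force
      then obtain a where a: "a \<in> set (body r)" "x \<in> ovars_atom a" using wr unfolding wf_rule_def by blast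
      obtain P' os' t' where ha: "a = Atom P' os' t'" by (cases a)
      have "OV x \<in> set os'" proof -
        obtain xa where "xa \<in> set os'" "x \<in> ovars_ot xa" using a(2) ha by auto
        moreover have "xa = OV x" using calculation(2) by (cases xa) auto
        ultimately show ?thesis by simp
      qed
      then have "\<sigma> x \<in> set (fst (snd (eval_atom \<sigma> \<theta> a)))" using ha by force
      then show ?thesis using drule.IH[OF a(1) drule.prems] OV ot by auto
    qed
  qed
qed

definition hf :: "('o \<Rightarrow> 'o) \<Rightarrow> ('n,'o) fact \<Rightarrow> ('n,'o) fact" where
  "hf h f = (fst f, map h (fst (snd f)), snd (snd f))"

lemma eval_ot_hom: "(\<And>c. ot = OC c \<Longrightarrow> h c = c) \<Longrightarrow> eval_ot (h \<circ> \<sigma>) ot = h (eval_ot \<sigma> ot)"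
  by (cases ot) auto

lemma eval_hom: "(\<And>c. c \<in> consts_atom a \<Longrightarrow> h c = c) \<Longrightarrow>
   eval_atom (h \<circ> \<sigma>) \<theta> a = hf h (eval_atom \<sigma> \<theta> a)"
proof (cases a)
  case (Atom P os t)
  assume H: "\<And>c. c \<in> consts_atom a \<Longrightarrow> h c = c"
  have "map (eval_ot (h \<circ> \<sigma>)) os = map h (map (eval_ot \<sigma>) os)"
    using H Atom by (auto intro!: eval_ot_hom)
  then show ?thesis using Atom by (simp add: hf_def)
qed

lemma derivable_hom: "derivable Pi B f \<Longrightarrow> (\<forall>c\<in>consts_of Pi. h c = c) \<Longrightarrow>
   derivable Pi (hf h ` B) (hf h f)"
proof (induction rule: derivable.induct)
  case (dbase f) then show ?case by (auto intro: derivable.dbase)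
next
  case (drule r \<sigma> \<theta>)
  have C: "\<And>a c. a \<in> set (body r) \<union> {head r} \<Longrightarrow> c \<in> consts_atom a \<Longrightarrow> h c = c"
    using drule.hyps(1) drule.prems unfolding consts_of_def by blast
  show ?case
  proof (rule drule'[OF drule.hyps(1), where \<sigma>="h \<circ> \<sigma>" and \<theta>=\<theta>])
    fix a assume a: "a \<in> set (body r)"
    then show "derivable Pi (hf h ` B) (eval_atom (h \<circ> \<sigma>) \<theta> a)"
      using drule.IH[OF a drule.prems] eval_hom[of a h \<sigma> \<theta>] C[of a] a by simp
  next
    show "hf h (eval_atom \<sigma> \<theta> (head r)) = eval_atom (h \<circ> \<sigma>) \<theta> (head r)"
      using eval_hom[of "head r" h \<sigma> \<theta>] C[of "head r"] by simp
  qed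
qed



definition psi_fact :: "('n,'o) fact \<Rightarrow> ('n xname,'o) fact" where
  "psi_fact f = (psi_pred (fst f), fst (snd f), snd (snd f))"
definition lift_fact :: "('n,'o) fact \<Rightarrow> ('n xname,'o) fact" where
  "lift_fact f = (lift_pred (fst f), fst (snd f), snd (snd f))"

lemma lift_facts_eq: "lift_facts D = lift_fact ` D"
  unfolding lift_facts_def lift_fact_def by (auto simp: case_prod_beta)

lemma psi_pred_eq: "psi_pred P = (if is_edb P \<and> is_temporal P
   then Pred (PsiN (pname P)) False (oarity P) True else lift_pred P)"
  by (cases P) simp

lemma oarity_lift[simp]: "oarity (lift_pred P) = oarity P" by (cases P) simp
lemma psi_inj: "psi_pred P = psi_pred P' \<Longrightarrow> P = P'"
  by (cases P; cases P') (auto split: if_splits)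
lemma psi_lift: "psi_pred P = lift_pred P' \<Longrightarrow> \<not> (is_edb P \<and> is_temporal P) \<and> P = P'"
  by (cases P; cases P') (auto split: if_splits)
lemma lift_inj: "lift_pred P = lift_pred P' \<Longrightarrow> P = P'"
  by (cases P; cases P') auto
lemma names[simp]: "psi_pred P \<noteq> predA" "psi_pred P \<noteq> predV" "lift_pred P \<noteq> predA"
   "lift_pred P \<noteq> predV" "predA \<noteq> predV" "predV \<noteq> predA"
   "predA \<noteq> psi_pred P" "predV \<noteq> psi_pred P" "predA \<noteq> lift_pred P" "predV \<noteq> lift_pred P"
  by (cases P; simp add: predA_def predV_def)+

lemma eval_psi: "eval_atom \<sigma> \<theta> (psi_atom a) = psi_fact (eval_atom \<sigma> \<theta> a)"
  by (cases a) (simp add: psi_fact_def)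
lemma psi_rule_sel[simp]: "body (psi_rule r) = map psi_atom (body r)" "head (psi_rule r) = psi_atom (head r)"
  by (cases r; simp)+
lemma fst_eval: "fst (eval_atom \<sigma> \<theta> a) = atom_pred a" by (cases a) simp

lemma eval_x: "length os = k \<Longrightarrow>
  eval_atom (\<lambda>i. os ! i) (\<lambda>_. t) (Atom P (xvars k) (tvar j)) = (P, os, Some (t + j))"
  by (auto simp: xvars_def tvar_def comp_def map_nth)
lemma eval_0: "eval_atom \<sigma> \<theta> (Atom P [] (tvar j)) = (P, [], Some (\<theta> 0 + j))"
  by (simp add: tvar_def)
lemma eval_gen: "eval_atom \<sigma> \<theta> (Atom P (xvars k) (tvar j)) = (P, map \<sigma> [0..<k], Some (\<theta> 0 + j))"
  by (simp add: xvars_def tvar_def comp_def)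

definition inv :: "('n,'o) query \<Rightarrow> ('n,'o) fact set \<Rightarrow> int set \<Rightarrow> ('n xname,'o) fact \<Rightarrow> bool" where
  "inv Q B T f \<longleftrightarrow> (\<exists>g. f = psi_fact g \<and> derivable (snd Q) B g \<and> fst g \<in> preds_of (snd Q))
     \<or> (\<exists>g\<in>B. f = lift_fact g) \<or> (\<exists>t\<in>T. f = (predV, [], Some t)) \<or> (\<exists>t\<in>T. f = (predA, [], Some t))"

lemma inv_psi: "inv Q B T (psi_fact x) \<Longrightarrow> derivable (snd Q) B x"
  unfolding inv_def
proof (elim disjE exE conjE bexE)
  fix g assume "psi_fact x = psi_fact g" "derivable (snd Q) B g"
  then have "x = g" using psi_inj[of "fst x" "fst g"] by (auto simp: psi_fact_def prod_eq_iff)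
  then show ?thesis using \<open>derivable (snd Q) B g\<close> by simp
next
  fix g assume "g \<in> B" "psi_fact x = lift_fact g"
  then have "x = g" using psi_lift[of "fst x" "fst g"] by (auto simp: psi_fact_def lift_fact_def prod_eq_iff)
  then show ?thesis using \<open>g \<in> B\<close> by (auto intro: dbase)
qed (auto simp: psi_fact_def)

lemma inv_lift: "inv Q B T (lift_pred P, os, t) \<Longrightarrow> derivable (snd Q) B (P, os, t)"
  unfolding inv_def
proof (elim disjE exE conjE bexE)
  fix g assume "(lift_pred P, os, t) = psi_fact g" "derivable (snd Q) B g"
  then show ?thesis using psi_lift[of "fst g" P] by (auto simp: psi_fact_def prod_eq_iff)
next
  fix g assume "g \<in> B" "(lift_pred P, os, t) = lift_fact g"
  then have "(P, os, t) = g" using lift_inj[of P "fst g"] by (auto simp: lift_fact_def prod_eq_iff)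
  then show ?thesis using \<open>g \<in> B\<close> by (auto intro: dbase)
qed auto

lemma inv_V: "inv Q B T (predV, [], Some t) \<Longrightarrow> t \<in> T"
  unfolding inv_def by (auto simp: psi_fact_def lift_fact_def)
lemma inv_A: "inv Q B T (predA, [], Some t) \<Longrightarrow> t \<in> T"
  unfolding inv_def by (auto simp: psi_fact_def lift_fact_def)

lemma inv_lemma:
  assumes d: "derivable (crit_program Q) B' f"
  and base: "\<And>f. f \<in> B' \<Longrightarrow> inv Q B T f"
  and Tc: "\<And>t. t \<in> T \<Longrightarrow> t + 1 \<in> T"
  and cl: "\<And>P os t. t + 1 \<in> T \<Longrightarrow> P \<in> temporal_edb_preds (snd Q) \<Longrightarrow>
      derivable (snd Q) B (P, os, Some t) \<Longrightarrow> derivable (snd Q) B (P, os, Some (t + 1))"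
  shows "inv Q B T f"
  using d
proof induction
  case (dbase f) then show ?case by (rule base)
next
  case (drule r \<sigma> \<theta>)
  from drule.hyps(1) consider (psi) r0 where "r0 \<in> snd Q" "r = psi_rule r0"
    | (AV) "r = Rule [Atom predA [] (tvar 0)] (Atom predV [] (tvar 0))"
    | (VV) "r = Rule [Atom predV [] (tvar 0)] (Atom predV [] (tvar 1))"
    | (cp) P where "P \<in> temporal_edb_preds (snd Q)" "r = Rule [Atom (lift_pred P) (xvars (oarity P)) (tvar 0)]
              (Atom (psi_pred P) (xvars (oarity P)) (tvar 0))"
    | (pr) P where "P \<in> temporal_edb_preds (snd Q)" "r = Rule [Atom predV [] (tvar 1), Atom (psi_pred P) (xvars (oarity P)) (tvar 0)]
              (Atom (psi_pred P) (xvars (oarity P)) (tvar 1))"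
    unfolding crit_program_def by blast
  then show ?case
  proof cases
    case psi
    have "derivable (snd Q) B (eval_atom \<sigma> \<theta> (head r0))"
    proof (rule derivable.drule[OF psi(1)])
      fix a assume "a \<in> set (body r0)"
      then have "inv Q B T (psi_fact (eval_atom \<sigma> \<theta> a))"
        using drule.IH[of "psi_atom a"] psi(2) by (simp add: eval_psi)
      then show "derivable (snd Q) B (eval_atom \<sigma> \<theta> a)" by (rule inv_psi)
    qed
    moreover have "fst (eval_atom \<sigma> \<theta> (head r0)) \<in> preds_of (snd Q)"
      using psi(1) by (auto simp: fst_eval preds_of_def preds_of_rule_def)
    ultimately show ?thesis using psi(2) unfolding inv_def
      by (intro disjI1 exI[of _ "eval_atom \<sigma> \<theta> (head r0)"]) (simp add: eval_psi)
  next
    case AV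
    then have "inv Q B T (predA, [], Some (\<theta> 0 + 0))" using drule.IH[of "Atom predA [] (tvar 0)"]
      by (simp add: eval_0 tvar_def)
    then have "\<theta> 0 \<in> T" using inv_A by fastforce
    then show ?thesis using AV unfolding inv_def by (auto simp: eval_0 tvar_def)
  next
    case VV
    then have "inv Q B T (predV, [], Some (\<theta> 0 + 0))" using drule.IH[of "Atom predV [] (tvar 0)"]
      by (simp add: eval_0 tvar_def)
    then have "\<theta> 0 + 1 \<in> T" using inv_V Tc by fastforce
    then show ?thesis using VV unfolding inv_def by (auto simp: eval_0 tvar_def)
  next
    case cp
    then have I: "inv Q B T (lift_pred P, map \<sigma> [0..<oarity P], Some (\<theta> 0 + 0))"
      using drule.IH[of "Atom (lift_pred P) (xvars (oarity P)) (tvar 0)"] by (simp add: xvars_def tvar_def comp_def)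
    have te: "is_edb P \<and> is_temporal P" using cp(1) by (simp add: temporal_edb_preds_def)
    have "(lift_pred P, map \<sigma> [0..<oarity P], Some (\<theta> 0)) \<in> lift_fact ` B"
      using I te unfolding inv_def
      by (auto simp: psi_fact_def dest: psi_lift[OF sym])
    then have "(P, map \<sigma> [0..<oarity P], Some (\<theta> 0)) \<in> B"
      by (auto simp: lift_fact_def dest: lift_inj)
    moreover have "P \<in> preds_of (snd Q)" using cp(1) by (simp add: temporal_edb_preds_def)
    ultimately show ?thesis using cp(2) unfolding inv_def
      by (auto simp: xvars_def tvar_def comp_def psi_fact_def intro!: exI[of _ "(P, map \<sigma> [0..<oarity P], Some (\<theta> 0))"] dbase)
  next
    case pr
    have "inv Q B T (predV, [], Some (\<theta> 0 + 1))" using drule.IH[of "Atom predV [] (tvar 1)"] pr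
      by (simp add: eval_0 tvar_def)
    then have T1: "\<theta> 0 + 1 \<in> T" using inv_V by fastforce
    have "inv Q B T (psi_fact (P, map \<sigma> [0..<oarity P], Some (\<theta> 0)))"
      using drule.IH[of "Atom (psi_pred P) (xvars (oarity P)) (tvar 0)"] pr
      by (simp add: xvars_def tvar_def comp_def psi_fact_def)
    then have "derivable (snd Q) B (P, map \<sigma> [0..<oarity P], Some (\<theta> 0))" by (rule inv_psi)
    then have "derivable (snd Q) B (P, map \<sigma> [0..<oarity P], Some (\<theta> 0 + 1))"
      using cl T1 pr(1) by blast
    moreover have "P \<in> preds_of (snd Q)" using pr(1) by (simp add: temporal_edb_preds_def)
    ultimately show ?thesis using pr(2) unfolding inv_def
      by (auto simp: xvars_def tvar_def comp_def psi_fact_def)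
  qed
qed

lemma fwd:
  assumes "derivable (snd Q) B g" "fst g \<in> preds_of (snd Q)"
  and base: "\<And>g. g \<in> B \<Longrightarrow> fst g \<in> preds_of (snd Q) \<Longrightarrow> derivable (crit_program Q) B' (psi_fact g)"
  shows "derivable (crit_program Q) B' (psi_fact g)"
  using assms(1,2)
proof induction
  case (dbase f) then show ?case by (rule base)
next
  case (drule r \<sigma> \<theta>)
  have r': "psi_rule r \<in> crit_program Q" unfolding crit_program_def using drule.hyps by blast
  have "derivable (crit_program Q) B' (eval_atom \<sigma> \<theta> (head (psi_rule r)))"
  proof (rule derivable.drule[OF r'])
    fix a assume "a \<in> set (body (psi_rule r))"
    then obtain a0 where a0: "a0 \<in> set (body r)" "a = psi_atom a0" by auto
    moreover have "fst (eval_atom \<sigma> \<theta> a0) \<in> preds_of (snd Q)"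
      using a0(1) drule.hyps(1) by (auto simp: fst_eval preds_of_def preds_of_rule_def)
    ultimately show "derivable (crit_program Q) B' (eval_atom \<sigma> \<theta> a)"
      using drule.IH eval_psi by metis
  qed
  then show ?case by (simp add: eval_psi)
qed



lemma baseD:
  fixes Q :: "('n,'o) query"
  assumes "is_dataset D" "lift_facts D \<subseteq> B'" "g \<in> D" "fst g \<in> preds_of (snd Q)"
  shows "derivable (crit_program Q) B' (psi_fact g)"
proof -
  obtain P os t where g: "g = (P, os, t)" by (cases g)
  have wf: "length os = oarity P" "is_temporal P \<longleftrightarrow> t \<noteq> None" "is_edb P"
    using assms(1,3) g by (auto simp: is_dataset_def wf_fact_def)
  have lg: "lift_fact g \<in> B'" using assms(2,3) by (auto simp: lift_facts_eq)
  show ?thesis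
  proof (cases "is_temporal P")
    case True
    then obtain s where s: "t = Some s" using wf by auto
    have Pin: "P \<in> temporal_edb_preds (snd Q)" using True wf assms(4) g
      by (simp add: temporal_edb_preds_def)
    let ?r = "Rule [Atom (lift_pred P) (xvars (oarity P)) (tvar 0)]
              (Atom (psi_pred P) (xvars (oarity P)) (tvar 0)) :: ('n xname, 'o) rule"
    have r: "?r \<in> crit_program Q" using Pin unfolding crit_program_def by blast
    show ?thesis
    proof (rule drule'[OF r, where \<sigma>="\<lambda>i. os ! i" and \<theta>="\<lambda>_. s"])
      fix a assume "a \<in> set (body ?r)"
      then show "derivable (crit_program Q) B' (eval_atom (\<lambda>i. os ! i) (\<lambda>_. s) a)"
        using lg wf(1) g s eval_x[of os "oarity P" s "lift_pred P" 0]
        by (auto simp: lift_fact_def intro: dbase)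
    next
      show "psi_fact g = eval_atom (\<lambda>i. os ! i) (\<lambda>_. s) (head ?r)"
        using wf(1) g s eval_x[of os "oarity P" s "psi_pred P" 0] by (simp add: psi_fact_def tvar_def)
    qed
  next
    case False
    then have "psi_fact g = lift_fact g" using g by (simp add: psi_fact_def lift_fact_def psi_pred_eq)
    then show ?thesis using lg by (auto intro: dbase)
  qed
qed

lemma chain:
  fixes Q :: "('n,'o) query"
  assumes Pin: "P \<in> temporal_edb_preds (snd Q)" and len: "length os = oarity P"
    and C: "set os \<subseteq> crit_domain Q D oI" and U: "crit_update Q D oI \<tau>in \<subseteq> B'"
  shows "derivable (crit_program Q) B' (predV, [], Some (\<tau>in + 1 + int n)) \<and>
         derivable (crit_program Q) B' (psi_pred P, os, Some (\<tau>in + 1 + int n))"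
proof (induction n)
  case 0
  let ?rA = "Rule [Atom predA [] (tvar 0)] (Atom predV [] (tvar 0)) :: ('n xname, 'o) rule"
  have rA: "?rA \<in> crit_program Q" unfolding crit_program_def by blast
  have A: "(predA, [], Some (\<tau>in + 1)) \<in> B'" using U unfolding crit_update_def by blast
  have V: "derivable (crit_program Q) B' (predV, [], Some (\<tau>in + 1))"
  proof (rule drule'[OF rA, where \<sigma>="\<lambda>i. os ! i" and \<theta>="\<lambda>_. \<tau>in + 1"])
    fix a assume "a \<in> set (body ?rA)"
    then show "derivable (crit_program Q) B' (eval_atom (\<lambda>i. os ! i) (\<lambda>_. \<tau>in + 1) a)"
      using A by (auto simp: tvar_def intro: dbase)
  qed (simp add: tvar_def)
  let ?r = "Rule [Atom (lift_pred P) (xvars (oarity P)) (tvar 0)]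
              (Atom (psi_pred P) (xvars (oarity P)) (tvar 0)) :: ('n xname, 'o) rule"
  have r: "?r \<in> crit_program Q" using Pin unfolding crit_program_def by blast
  have L: "(lift_pred P, os, Some (\<tau>in + 1)) \<in> B'" using U Pin len C unfolding crit_update_def by blast
  have "derivable (crit_program Q) B' (psi_pred P, os, Some (\<tau>in + 1))"
  proof (rule drule'[OF r, where \<sigma>="\<lambda>i. os ! i" and \<theta>="\<lambda>_. \<tau>in + 1"])
    fix a assume "a \<in> set (body ?r)"
    then show "derivable (crit_program Q) B' (eval_atom (\<lambda>i. os ! i) (\<lambda>_. \<tau>in + 1) a)"
      using L len eval_x[of os "oarity P" "\<tau>in + 1" "lift_pred P" 0] by (auto intro: dbase)
  next
    show "(psi_pred P, os, Some (\<tau>in + 1)) = eval_atom (\<lambda>i. os ! i) (\<lambda>_. \<tau>in + 1) (head ?r)"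
      using len eval_x[of os "oarity P" "\<tau>in + 1" "psi_pred P" 0] by (simp add: tvar_def)
  qed
  then show ?case using V by simp
next
  case (Suc n)
  let ?t = "\<tau>in + 1 + int n"
  have eq: "\<tau>in + 1 + int (Suc n) = ?t + 1" by simp
  let ?rV = "Rule [Atom predV [] (tvar 0)] (Atom predV [] (tvar 1)) :: ('n xname, 'o) rule"
  have rV: "?rV \<in> crit_program Q" unfolding crit_program_def by blast
  have V: "derivable (crit_program Q) B' (predV, [], Some (?t + 1))"
  proof (rule drule'[OF rV, where \<sigma>="\<lambda>i. os ! i" and \<theta>="\<lambda>_. ?t"])
    fix a assume "a \<in> set (body ?rV)"
    then show "derivable (crit_program Q) B' (eval_atom (\<lambda>i. os ! i) (\<lambda>_. ?t) a)"
      using Suc.IH by (auto simp: tvar_def)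
  qed (simp add: tvar_def)
  let ?r = "Rule [Atom predV [] (tvar 1), Atom (psi_pred P) (xvars (oarity P)) (tvar 0)]
              (Atom (psi_pred P) (xvars (oarity P)) (tvar 1)) :: ('n xname, 'o) rule"
  have r: "?r \<in> crit_program Q" using Pin unfolding crit_program_def by blast
  have "derivable (crit_program Q) B' (psi_pred P, os, Some (?t + 1))"
  proof (rule drule'[OF r, where \<sigma>="\<lambda>i. os ! i" and \<theta>="\<lambda>_. ?t"])
    fix a assume "a \<in> set (body ?r)"
    then show "derivable (crit_program Q) B' (eval_atom (\<lambda>i. os ! i) (\<lambda>_. ?t) a)"
      using V Suc.IH len eval_x[of os "oarity P" "?t" "psi_pred P" 0] by (auto simp: tvar_def)
  next
    show "(psi_pred P, os, Some (?t + 1)) = eval_atom (\<lambda>i. os ! i) (\<lambda>_. ?t) (head ?r)"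
      using len eval_x[of os "oarity P" "?t" "psi_pred P" 1] by (simp add: tvar_def)
  qed
  then show ?case using V eq by simp
qed



theorem lemma2:
  fixes Q :: "('n, 'o) query" and D :: "('n, 'o) fact set" and \<tau>in \<tau>out :: int and oI :: 'o
  assumes "wf_query Q" and "temporal_query Q"
    and "is_history \<tau>in D" and "\<tau>out \<le> \<tau>in"
    and "oI \<notin> consts_of (snd Q) \<union> consts_facts D"
  shows "DTP Q D \<tau>in \<tau>out \<longleftrightarrow>
    (\<forall>os. set os \<subseteq> crit_domain Q D oI \<longrightarrow>
       os \<in> answers (crit_query Q) (lift_facts D \<union> crit_update Q D oI \<tau>in) \<tau>out \<longrightarrow>
       os \<in> answers (crit_query Q) (lift_facts D) \<tau>out)"
proof -
  let ?Pi = "snd Q" and ?P = "fst Q" and ?C = "crit_domain Q D oI"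
  let ?UI = "crit_update Q D oI \<tau>in" and ?Pi' = "crit_program Q"
  let ?B1 = "lift_facts D \<union> ?UI"
  have wfP: "wf_program ?Pi" and PQin: "?P \<in> preds_of ?Pi" and PQidb: "\<not> is_edb ?P"
    using assms(1) by (auto simp: wf_query_def)
  have Dds: "is_dataset D" using assms(3) by (simp add: is_history_def)
  have psiPQ: "psi_fact (?P, os, t) = (lift_pred ?P, os, t)" for os t
    using PQidb by (simp add: psi_fact_def psi_pred_eq)
  have ans': "os \<in> answers (crit_query Q) B' \<tau> \<longleftrightarrow>
      length os = oarity ?P \<and> derivable ?Pi' B' (lift_pred ?P, os, Some \<tau>)" for os B' \<tau>
    by (simp add: answers_def crit_query_def entails_iff)
  have ans: "os \<in> answers Q B \<tau> \<longleftrightarrow> length os = oarity ?P \<and> derivable ?Pi B (?P, os, Some \<tau>)"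
    for os B \<tau> by (simp add: answers_def entails_iff)
  have fwdD: "derivable ?Pi' B' (psi_fact g)"
    if "lift_facts D \<subseteq> B'" "derivable ?Pi D g" "fst g \<in> preds_of ?Pi" for g B'
    using fwd[OF that(2,3)] baseD[OF Dds that(1)] by blast
  show ?thesis
  proof
    assume dtp: "DTP Q D \<tau>in \<tau>out"
    show "\<forall>os. set os \<subseteq> ?C \<longrightarrow> os \<in> answers (crit_query Q) ?B1 \<tau>out \<longrightarrow>
       os \<in> answers (crit_query Q) (lift_facts D) \<tau>out"
    proof (intro allI impI)
      fix os assume "set os \<subseteq> ?C" "os \<in> answers (crit_query Q) ?B1 \<tau>out"
      then have len: "length os = oarity ?P" and d1: "derivable ?Pi' ?B1 (lift_pred ?P, os, Some \<tau>out)"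
        by (auto simp: ans')
      define Us where "Us = {(P, os, Some t) | P os t. P \<in> temporal_edb_preds ?Pi \<and>
          length os = oarity P \<and> set os \<subseteq> ?C \<and> \<tau>in < t}"
      have wfB: "\<forall>g\<in>D \<union> Us. wf_fact g" using Dds
        by (auto simp: Us_def is_dataset_def wf_fact_def temporal_edb_preds_def)
      have cB: "consts_facts (D \<union> Us) \<subseteq> ?C"
        by (auto simp: Us_def consts_facts_def crit_domain_def)
      have "inv Q (D \<union> Us) {t. \<tau>in < t} (lift_pred ?P, os, Some \<tau>out)"
      proof (rule inv_lemma[OF d1])
        fix f assume "f \<in> ?B1"
        then show "inv Q (D \<union> Us) {t. \<tau>in < t} f"
        proof
          assume "f \<in> lift_facts D" then show ?thesis
            unfolding inv_def lift_facts_eq by blast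
        next
          assume "f \<in> ?UI"
          then have "f = (predA, [], Some (\<tau>in + 1)) \<or> (\<exists>P os. f = lift_fact (P, os, Some (\<tau>in + 1)) \<and>
              P \<in> temporal_edb_preds ?Pi \<and> length os = oarity P \<and> set os \<subseteq> ?C)"
            unfolding crit_update_def by (auto simp: lift_fact_def)
          then show ?thesis unfolding inv_def Us_def by force
        qed
      next
        fix t :: int assume "t \<in> {t. \<tau>in < t}" then show "t + 1 \<in> {t. \<tau>in < t}" by simp
      next
        fix P os t assume a: "t + 1 \<in> {t. \<tau>in < t}" "P \<in> temporal_edb_preds ?Pi"
          "derivable ?Pi (D \<union> Us) (P, os, Some t)"
        have "length os = oarity P" using derivable_wf[OF a(3) wfP wfB] by (simp add: wf_fact_def)
        moreover have "set os \<subseteq> ?C" using derivable_adom[OF a(3) wfP] cB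
          by (auto simp: crit_domain_def)
        ultimately have "(P, os, Some (t + 1)) \<in> Us" using a(1,2) by (auto simp: Us_def)
        then show "derivable ?Pi (D \<union> Us) (P, os, Some (t + 1))" by (auto intro: dbase)
      qed
      then have dUs: "derivable ?Pi (D \<union> Us) (?P, os, Some \<tau>out)" by (rule inv_lift)
      obtain F where F: "F \<subseteq> D \<union> Us" "finite F" "derivable ?Pi F (?P, os, Some \<tau>out)"
        using derivable_compact[OF dUs] by (elim exE conjE) auto
      let ?U = "F \<inter> Us"
      have "\<forall>f\<in>Us. wf_fact f \<and> is_edb (fst f) \<and> (case snd (snd f) of None \<Rightarrow> False | Some \<tau> \<Rightarrow> \<tau> > \<tau>in)"
        unfolding Us_def by (auto simp: wf_fact_def temporal_edb_preds_def)
      then have upd: "is_update \<tau>in ?U" using F(2)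
        unfolding is_update_def is_dataset_def by auto
      have "derivable ?Pi (D \<union> ?U) (?P, os, Some \<tau>out)"
      proof -
        have "F \<subseteq> D \<union> ?U" using F(1) by blast
        then show ?thesis by (rule derivable_mono[OF F(3)])
      qed
      then have "os \<in> answers Q (D \<union> ?U) \<tau>out" using len by (simp add: ans)
      then have "os \<in> answers Q D \<tau>out" using dtp upd by (simp add: DTP_def)
      then have "derivable ?Pi D (?P, os, Some \<tau>out)" by (simp add: ans)
      then have "derivable ?Pi' (lift_facts D) (psi_fact (?P, os, Some \<tau>out))"
        using fwdD[OF subset_refl] PQin by simp
      then have "derivable ?Pi' (lift_facts D) (lift_pred ?P, os, Some \<tau>out)"
        by (simp only: psiPQ)
      then show "os \<in> answers (crit_query Q) (lift_facts D) \<tau>out" using len by (simp add: ans')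
    qed
  next
    assume cond: "\<forall>os. set os \<subseteq> ?C \<longrightarrow> os \<in> answers (crit_query Q) ?B1 \<tau>out \<longrightarrow>
       os \<in> answers (crit_query Q) (lift_facts D) \<tau>out"
    show "DTP Q D \<tau>in \<tau>out" unfolding DTP_def
    proof (intro allI impI)
      fix U :: "('n,'o) fact set" assume upd: "is_update \<tau>in U"
      show "answers Q D \<tau>out = answers Q (D \<union> U) \<tau>out"
      proof
        show "answers Q D \<tau>out \<subseteq> answers Q (D \<union> U) \<tau>out"
          by (auto simp: ans intro: derivable_mono)
      next
        show "answers Q (D \<union> U) \<tau>out \<subseteq> answers Q D \<tau>out"
        proof
          fix os assume "os \<in> answers Q (D \<union> U) \<tau>out"
          then have len: "length os = oarity ?P" and d: "derivable ?Pi (D \<union> U) (?P, os, Some \<tau>out)"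
            by (auto simp: ans)
          define K where "K = consts_of ?Pi \<union> consts_facts D"
          define h where "h c = (if c \<in> K then c else oI)" for c
          have hK: "\<forall>c\<in>consts_of ?Pi. h c = c" by (simp add: h_def K_def)
          have hD: "hf h ` D = D"
          proof -
            have "hf h f = f" if "f \<in> D" for f
            proof -
              have "set (fst (snd f)) \<subseteq> K" using that by (auto simp: K_def consts_facts_def)
              then have "map h (fst (snd f)) = fst (snd f)" by (auto simp: h_def intro!: map_idI)
              then show ?thesis by (simp add: hf_def)
            qed
            then show ?thesis by force
          qed
          have d2: "derivable ?Pi (D \<union> hf h ` U) (?P, map h os, Some \<tau>out)"
            using derivable_hom[OF d hK] hD by (simp add: image_Un hf_def)
          have d3: "derivable ?Pi' ?B1 (psi_fact (?P, map h os, Some \<tau>out))"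
          proof (rule fwd[OF d2])
            show "fst (?P, map h os, Some \<tau>out) \<in> preds_of ?Pi" using PQin by simp
          next
            fix g assume g: "g \<in> D \<union> hf h ` U" "fst g \<in> preds_of ?Pi"
            show "derivable ?Pi' ?B1 (psi_fact g)"
            proof (cases "g \<in> D")
              case True then show ?thesis using baseD[OF Dds _ True g(2)] by blast
            next
              case False
              then obtain u where u: "u \<in> U" "g = hf h u" using g(1) by blast
              obtain P os' t where ut: "u = (P, os', t)" by (cases u)
              have uu: "wf_fact u" "is_edb P" "\<exists>s. t = Some s \<and> \<tau>in < s"
                using upd u(1) ut by (auto simp: is_update_def is_dataset_def split: option.splits)
              then obtain s where s: "t = Some s" "\<tau>in < s" by blast
              have tP: "is_temporal P" "length os' = oarity P"
                using uu(1) ut s by (auto simp: wf_fact_def)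
              have Pin: "P \<in> temporal_edb_preds ?Pi"
                using g(2) u(2) ut uu(2) tP by (simp add: temporal_edb_preds_def hf_def)
              have C: "set (map h os') \<subseteq> ?C" by (auto simp: h_def crit_domain_def K_def)
              define n where "n = nat (s - \<tau>in - 1)"
              have n: "s = \<tau>in + 1 + int n" using s(2) by (simp add: n_def)
              have "derivable ?Pi' ?B1 (psi_pred P, map h os', Some s)"
                using chain[OF Pin _ C, where B'="?B1" and \<tau>in=\<tau>in and n=n] n tP(2) by simp
              then show ?thesis using u(2) ut s by (simp add: psi_fact_def hf_def)
            qed
          qed
          have "derivable ?Pi' ?B1 (lift_pred ?P, map h os, Some \<tau>out)" using d3 by (simp only: psiPQ)
          then have "map h os \<in> answers (crit_query Q) ?B1 \<tau>out" using len by (simp add: ans')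
          moreover have "set (map h os) \<subseteq> ?C" by (auto simp: h_def crit_domain_def K_def)
          ultimately have "map h os \<in> answers (crit_query Q) (lift_facts D) \<tau>out" using cond by blast
          then have d4: "derivable ?Pi' (lift_facts D) (lift_pred ?P, map h os, Some \<tau>out)"
            by (simp add: ans')
          have "inv Q D {} (lift_pred ?P, map h os, Some \<tau>out)"
            by (rule inv_lemma[OF d4]) (auto simp: inv_def lift_facts_eq)
          then have d5: "derivable ?Pi D (?P, map h os, Some \<tau>out)" by (rule inv_lift)
          have "set (map h os) \<subseteq> K" using derivable_adom[OF d5 wfP] by (simp add: K_def)
          then have "\<forall>c\<in>set os. c \<in> K" using assms(5) by (auto simp: h_def K_def split: if_splits)
          then have "map h os = os" by (auto simp: h_def intro!: map_idI)
          then show "os \<in> answers Q D \<tau>out" using d5 len by (simp add: ans)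
        qed
      qed
    qed
  qed
qed

end
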